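(* For every $n$, every graph $G=(V,E)$ on $V=\{1,\ldots,n\}$, every bilinear function $b(\mathbf x)=\sum_{ij\in E}a_{ij}x_ix_j$ with real coefficients, and every $\mathbf x\in[0,1]^n$, \[\operatorname{mcgap}[b](\mathbf x)\leqslant 600\sqrt n\,\operatorname{chgap}[b](\mathbf x).\]
   Context: Let $G=(V,E)$ be an undirected graph with $V=\{1,\ldots,n\}$; write $ij$ for the edge $\{i,j\}$. A bilinear function is $b:[0,1]^n\to\mathbb R$, $b(\mathbf x)=\sum_{ij\in E}a_{ij}x_ix_j$ with real coefficients $a_{ij}$. Its graph is $B=\{(\mathbf x,z)\in[0,1]^n\times\mathbb R: z=b(\mathbf x)\}$, and $\operatorname{conv}(B)$ is its convex hull. The McCormick polytopes are $P=\{(\mathbf x,\mathbf y)\in[0,1]^n\times[0,1]^{|E|}: y_{ij}\le x_i,\ y_{ij}\le x_j,\ y_{ij}\ge x_i+x_j-1\ \forall ij\in E\}$ and $Q=\{(\mathbf x,z)\in[0,1]^n\times\mathbb R:\exists\mathbf y\in[0,1]^{|E|}\text{ with }(\mathbf x,\mathbf y)\in P,\ z=\sum_{ij\in E}a_{ij}y_{ij}\}$. Define for $\mathbf x\in[0,1]^n$: $\operatorname{cav}[b](\mathbf x)=\max\{z:(\mathbf x,z)\in\operatorname{conv}(B)\}$, $\operatorname{vex}[b](\mathbf x)=\min\{z:(\mathbf x,z)\in\operatorname{conv}(B)\}$, $\operatorname{mcu}[b](\mathbf x)=\max\{z:(\mathbf x,z)\in Q\}$, $\operatorname{mcl}[b](\mathbf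 x)=\min\{z:(\mathbf x,z)\in Q\}$, the convex hull gap $\operatorname{chgap}[b]=\operatorname{cav}[b]-\operatorname{vex}[b]$ and the McCormick gap $\operatorname{mcgap}[b]=\operatorname{mcu}[b]-\operatorname{mcl}[b]$. *)

theory Defs
  imports "HOL-Analysis.Analysis"
begin

text \<open>Vertices are the elements of a finite type 'n (playing the role of {1..n}, n = CARD('n)).
  A graph is a set E of 2-element vertex sets (undirected edges ij = {i,j}).\<close>

definition simple_graph :: "('n::finite) set set \<Rightarrow> bool" where
  "simple_graph E \<longleftrightarrow> (\<forall>e\<in>E. card e = 2)"

definition unit_cube :: "(real^'n::finite) set" where
  "unit_cube = {x. \<forall>i. 0 \<le> x$i \<and> x$i \<le> 1}"

definition bil :: "('n::finite) set set \<Rightarrow> ('n set \<Rightarrow> real) \<Rightarrow> real^'n \<Rightarrow> real" where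
  "bil E a x = (\<Sum>e\<in>E. a e * (\<Prod>i\<in>e. x$i))"

definition bil_graph :: "('n::finite) set set \<Rightarrow> ('n set \<Rightarrow> real) \<Rightarrow> ((real^'n) \<times> real) set" where
  "bil_graph E a = {(x, bil E a x) | x. x \<in> unit_cube}"

definition mcP :: "('n::finite) set set \<Rightarrow> ((real^'n) \<times> ('n set \<Rightarrow> real)) set" where
  "mcP E = {(x, y). x \<in> unit_cube \<and>
      (\<forall>e\<in>E. 0 \<le> y e \<and> y e \<le> 1 \<and> (\<forall>i\<in>e. y e \<le> x$i) \<and> (\<Sum>i\<in>e. x$i) - 1 \<le> y e)}"

definition mcQ :: "('n::finite) set set \<Rightarrow> ('n set \<Rightarrow> real) \<Rightarrow> ((real^'n) \<times> real) set" where
  "mcQ E a = {(x, z). \<exists>y. (x, y) \<in> mcP E \<and> z = (\<Sum>e\<in>E. a e * y e)}"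

definition cav :: "('n::finite) set set \<Rightarrow> ('n set \<Rightarrow> real) \<Rightarrow> real^'n \<Rightarrow> real" where
  "cav E a x = Sup {z. (x, z) \<in> convex hull (bil_graph E a)}"

definition vex :: "('n::finite) set set \<Rightarrow> ('n set \<Rightarrow> real) \<Rightarrow> real^'n \<Rightarrow> real" where
  "vex E a x = Inf {z. (x, z) \<in> convex hull (bil_graph E a)}"

definition mcu :: "('n::finite) set set \<Rightarrow> ('n set \<Rightarrow> real) \<Rightarrow> real^'n \<Rightarrow> real" where
  "mcu E a x = Sup {z. (x, z) \<in> mcQ E a}"

definition mcl :: "('n::finite) set set \<Rightarrow> ('n set \<Rightarrow> real) \<Rightarrow> real^'n \<Rightarrow> real" where
  "mcl E a x = Inf {z. (x, z) \<in> mcQ E a}"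

definition chgap :: "('n::finite) set set \<Rightarrow> ('n set \<Rightarrow> real) \<Rightarrow> real^'n \<Rightarrow> real" where
  "chgap E a x = cav E a x - vex E a x"

definition mcgap :: "('n::finite) set set \<Rightarrow> ('n set \<Rightarrow> real) \<Rightarrow> real^'n \<Rightarrow> real" where
  "mcgap E a x = mcu E a x - mcl E a x"

end

theory Submission
  imports Defs
begin


definition eps :: "bool \<Rightarrow> real" where "eps b = (if b then 1 else -1)"

lemma eps_sq[simp]: "eps b * eps b = 1" by (simp add: eps_def)
lemma eps_sq2[simp]: "(eps b)^2 = 1" by (simp add: eps_def)

lemma flip_zero:
  fixes G :: "('n::finite \<Rightarrow> bool) \<Rightarrow> real"
  assumes "\<And>s. G (s(a := \<not> s a)) = G s"
  shows "(\<Sum>s\<in>UNIV. eps (s a) * G s) = 0"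
proof -
  let ?h = "\<lambda>s::'n\<Rightarrow>bool. s(a := \<not> s a)"
  have "(\<Sum>s\<in>UNIV. eps (s a) * G s) = (\<Sum>s\<in>UNIV. eps (?h s a) * G (?h s))"
    by (rule sum.reindex_bij_witness[of _ ?h ?h]) auto
  also have "\<dots> = (\<Sum>s\<in>UNIV. - (eps (s a) * G s))"
    by (intro sum.cong) (auto simp: assms eps_def)
  also have "\<dots> = - (\<Sum>s\<in>UNIV. eps (s a) * G s)"
    by (simp add: sum_negf)
  finally show ?thesis by simp
qed

lemma moments:
  fixes d :: "'n::finite \<Rightarrow> real"
  assumes "finite A"
  shows "(\<Sum>s\<in>UNIV. (\<Sum>i\<in>A. d i * eps (s i))^2) = real CARD('n\<Rightarrow>bool) * (\<Sum>i\<in>A. (d i)^2)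
       \<and> (\<Sum>s\<in>UNIV. (\<Sum>i\<in>A. d i * eps (s i))^4) \<le> 3 * real CARD('n\<Rightarrow>bool) * (\<Sum>i\<in>A. (d i)^2)^2"
  using assms
proof (induction A rule: finite_induct)
  case empty
  then show ?case by simp
next
  case (insert a A)
  define Z where "Z = (\<lambda>s::'n\<Rightarrow>bool. \<Sum>i\<in>A. d i * eps (s i))"
  define N where "N = real CARD('n\<Rightarrow>bool)"
  define T where "T = (\<Sum>i\<in>A. (d i)^2)"
  have Zinv: "\<And>s. Z (s(a := \<not> s a)) = Z s" unfolding Z_def
    using insert(2) by (intro sum.cong) auto
  have z1: "(\<Sum>s\<in>UNIV. eps (s a) * Z s) = 0" by (rule flip_zero) (simp add: Zinv)
  have z3: "(\<Sum>s\<in>UNIV. eps (s a) * (Z s)^3) = 0" by (rule flip_zero) (simp add: Zinv)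
  have IH2: "(\<Sum>s\<in>UNIV. (Z s)^2) = N * T" using insert(3) by (simp add: Z_def N_def T_def)
  have IH4: "(\<Sum>s\<in>UNIV. (Z s)^4) \<le> 3 * N * T^2" using insert(3) by (simp add: Z_def N_def T_def)
  have e: "\<And>s. (\<Sum>i\<in>insert a A. d i * eps (s i)) = d a * eps (s a) + Z s"
    using insert(1,2) by (simp add: Z_def)
  have p2: "\<And>s. (d a * eps (s a) + Z s)^2 = (d a)^2 + 2 * d a * (eps (s a) * Z s) + (Z s)^2"
  proof -
    fix s have "eps (s a) * eps (s a) = 1" by simp
    then show "(d a * eps (s a) + Z s)^2 = (d a)^2 + 2 * d a * (eps (s a) * Z s) + (Z s)^2"
      by (simp add: power2_eq_square algebra_simps)
  qed
  have p4: "\<And>s. (d a * eps (s a) + Z s)^4 = (d a)^4 + 4 * (d a)^3 * (eps (s a) * Z s)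
       + 6 * (d a)^2 * (Z s)^2 + 4 * d a * (eps (s a) * (Z s)^3) + (Z s)^4"
  proof -
    fix s have h: "eps (s a) * eps (s a) = 1" by simp
    have "(d a * eps (s a) + Z s)^4 = (d a)^4 * (eps (s a) * eps (s a))^2 + 4 * (d a)^3 * (eps (s a) * eps (s a)) * (eps (s a) * Z s)
       + 6 * (d a)^2 * (eps (s a) * eps (s a)) * (Z s)^2 + 4 * d a * (eps (s a) * (Z s)^3) + (Z s)^4"
      by (simp add: power2_eq_square power4_eq_xxxx algebra_simps power3_eq_cube)
    then show "(d a * eps (s a) + Z s)^4 = (d a)^4 + 4 * (d a)^3 * (eps (s a) * Z s)
       + 6 * (d a)^2 * (Z s)^2 + 4 * d a * (eps (s a) * (Z s)^3) + (Z s)^4" by (simp only: h) simp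
  qed
  have s2: "(\<Sum>s\<in>UNIV. (d a * eps (s a) + Z s)^2) = N * (d a)^2 + N * T"
    unfolding p2 sum.distrib sum_distrib_left[symmetric] z1 IH2 by (simp add: N_def)
  have s4: "(\<Sum>s\<in>UNIV. (d a * eps (s a) + Z s)^4) = N * (d a)^4 + 6 * (d a)^2 * (\<Sum>s\<in>UNIV. (Z s)^2) + (\<Sum>s\<in>UNIV. (Z s)^4)"
    unfolding p4 sum.distrib sum_distrib_left[symmetric] z1 z3 by (simp add: N_def)
  have T': "(\<Sum>i\<in>insert a A. (d i)^2) = (d a)^2 + T" using insert(1,2) by (simp add: T_def)
  have Npos: "N \<ge> 0" by (simp add: N_def)
  have "N * (d a)^4 + 6 * (d a)^2 * (N * T) + 3 * N * T^2 \<le> 3 * N * ((d a)^2 + T)^2"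
  proof -
    have "0 \<le> N * (d a)^4" using Npos by simp
    then show ?thesis by (simp add: power2_eq_square power4_eq_xxxx algebra_simps)
  qed
  then show ?case unfolding e T' s2 s4 IH2 using IH4 by (simp add: N_def algebra_simps)
qed

lemma abs_poly:
  fixes t y :: real assumes "t > 0"
  shows "y^2 / t - y^4 / (4 * t^3) \<le> \<bar>y\<bar>"
proof -
  define u where "u = \<bar>y\<bar>"
  have u0: "u \<ge> 0" by (simp add: u_def)
  have y2: "y^2 = u^2" "y^4 = u^4" by (simp_all add: u_def power2_abs)
  have key: "4 * t^2 * u^2 - u^4 \<le> 4 * t^3 * u"
  proof (cases "u \<le> t")
    case True
    have "0 \<le> u * (u^3 + 4 * t^2 * (t - u))" using True u0 assms by (intro mult_nonneg_nonneg) auto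
    then show ?thesis by (simp add: algebra_simps power2_eq_square power3_eq_cube power4_eq_xxxx)
  next
    case False
    have "0 \<le> (u^2 - 2*t^2)^2 + 4 * t^3 * (u - t)" using False assms by (intro add_nonneg_nonneg) auto
    then show ?thesis by (simp add: algebra_simps power2_eq_square power3_eq_cube power4_eq_xxxx)
  qed
  have t3: "t^3 > 0" using assms by simp
  have yy: "y * y = u * u" by (simp add: u_def)
  have "y^2 / t - y^4 / (4 * t^3) = (4 * t^2 * u^2 - u^4) / (4 * t^3)"
    using assms yy by (simp add: y2 field_simps power2_eq_square power3_eq_cube)
  also have "\<dots> \<le> (4 * t^3 * u) / (4 * t^3)" using key t3 by (intro divide_right_mono) auto
  also have "\<dots> = u" using t3 by simp
  finally show ?thesis by (simp add: u_def)
qed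

lemma khin:
  fixes d :: "'n::finite \<Rightarrow> real"
  shows "real CARD('n\<Rightarrow>bool) * sqrt (\<Sum>i\<in>UNIV. (d i)^2) / 4 \<le> (\<Sum>s\<in>UNIV. \<bar>\<Sum>i\<in>UNIV. d i * eps (s i)\<bar>)"
proof -
  define N where "N = real CARD('n\<Rightarrow>bool)"
  define T where "T = (\<Sum>i\<in>UNIV. (d i)^2)"
  define t where "t = sqrt T"
  define Y where "Y = (\<lambda>s::'n\<Rightarrow>bool. \<Sum>i\<in>UNIV. d i * eps (s i))"
  have m: "(\<Sum>s\<in>UNIV. (Y s)^2) = N * T" "(\<Sum>s\<in>UNIV. (Y s)^4) \<le> 3 * N * T^2"
    using moments[of UNIV d] by (simp_all add: Y_def N_def T_def)
  have T0: "T \<ge> 0" by (simp add: T_def sum_nonneg)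
  show ?thesis
  proof (cases "t = 0")
    case True then show ?thesis by (simp add: t_def T_def sum_nonneg)
  next
    case False
    then have tp: "t > 0" using T0 by (simp add: t_def)
    have tt: "t^2 = T" using T0 by (simp add: t_def)
    have "N * t / 4 = N * T / t - 3 * N * T^2 / (4 * t^3)"
      using tp by (simp add: tt[symmetric] field_simps power2_eq_square power3_eq_cube)
    also have "\<dots> \<le> (\<Sum>s\<in>UNIV. (Y s)^2) / t - (\<Sum>s\<in>UNIV. (Y s)^4) / (4 * t^3)"
      using m tp by (simp add: divide_right_mono)
    also have "\<dots> = (\<Sum>s\<in>UNIV. (Y s)^2 / t - (Y s)^4 / (4 * t^3))"
      by (simp add: sum_subtractf sum_divide_distrib)
    also have "\<dots> \<le> (\<Sum>s\<in>UNIV. \<bar>Y s\<bar>)"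
      by (intro sum_mono abs_poly tp)
    finally show ?thesis by (simp add: Y_def N_def T_def t_def)
  qed
qed

lemma l1_l2:
  fixes d :: "'n::finite \<Rightarrow> real"
  shows "(\<Sum>i\<in>UNIV. \<bar>d i\<bar>) \<le> sqrt (real CARD('n)) * sqrt (\<Sum>i\<in>UNIV. (d i)^2)"
proof -
  have "(\<Sum>i\<in>UNIV. 1 * \<bar>d i\<bar>)^2 \<le> (\<Sum>i\<in>(UNIV::'n set). (1::real)^2) * (\<Sum>i\<in>UNIV. \<bar>d i\<bar>^2)"
    using Cauchy_Schwarz_ineq_sum[of "\<lambda>_. 1" "\<lambda>i. \<bar>d i\<bar>" UNIV] by simp
  then have "(\<Sum>i\<in>UNIV. \<bar>d i\<bar>)^2 \<le> real CARD('n) * (\<Sum>i\<in>UNIV. (d i)^2)" by simp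
  then have "sqrt ((\<Sum>i\<in>UNIV. \<bar>d i\<bar>)^2) \<le> sqrt (real CARD('n) * (\<Sum>i\<in>UNIV. (d i)^2))"
    using real_sqrt_le_mono by blast
  then show ?thesis by (simp add: real_sqrt_mult sum_nonneg)
qed



definition same :: "('n \<Rightarrow> bool) \<Rightarrow> 'n set \<Rightarrow> bool" where
  "same \<sigma> e = (\<forall>i\<in>e. \<forall>j\<in>e. \<sigma> i = \<sigma> j)"

lemma same_pair[simp]: "same \<sigma> {i,j} = (\<sigma> i = \<sigma> j)" by (auto simp: same_def)

lemma eps_eq: "eps (a = b) = eps a * eps b" by (cases a; cases b) (auto simp: eps_def)

lemma exists_ge_avg:
  fixes f :: "'a::finite \<Rightarrow> real"
  assumes "real CARD('a) * m \<le> (\<Sum>s\<in>UNIV. f s)"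
  shows "\<exists>s. m \<le> f s"
proof (rule ccontr)
  assume "\<not> ?thesis"
  then have "\<And>s. f s < m" by (auto simp: not_le)
  then have "(\<Sum>s\<in>UNIV. f s) < (\<Sum>s\<in>(UNIV::'a set). m)"
    by (intro sum_strict_mono) auto
  then show False using assms by simp
qed

lemma cut_avg:
  fixes E :: "('n::finite) set set" and c :: "'n set \<Rightarrow> real"
  assumes E2: "\<forall>e\<in>E. card e = 2"
  shows "\<exists>l. (\<Sum>e\<in>E. \<bar>c e\<bar>) \<le> 2 * (\<Sum>e\<in>E. \<bar>c e\<bar> * (if same l e then 0 else 1))"
proof -
  define N where "N = real CARD('n\<Rightarrow>bool)"
  have half: "(\<Sum>l\<in>UNIV. (if same l e then 0 else 1::real)) = N / 2" if "e \<in> E" for e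
  proof -
    have "card e = 2" using E2 that by auto
    then obtain i j where ij: "e = {i,j}" "i \<noteq> j" by (auto simp: card_2_iff)
    have z: "(\<Sum>l\<in>UNIV. eps (l i) * eps (l j)) = 0"
      by (rule flip_zero) (use ij in auto)
    have pt: "\<And>l. (if same l e then 0 else 1::real) = (1 - eps (l i) * eps (l j)) / 2"
      using ij by (auto simp: eps_def)
    have "(\<Sum>l\<in>UNIV. (if same l e then 0 else 1::real)) = (\<Sum>l\<in>UNIV. (1 - eps (l i) * eps (l j)) / 2)"
      using pt by (intro sum.cong) auto
    also have "\<dots> = (N - 0) / 2" unfolding sum_divide_distrib[symmetric] sum_subtractf z
      by (simp add: N_def)
    finally show ?thesis by simp
  qed
  have "(\<Sum>l\<in>UNIV. 2 * (\<Sum>e\<in>E. \<bar>c e\<bar> * (if same l e then 0 else 1)))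
      = 2 * (\<Sum>e\<in>E. \<bar>c e\<bar> * (\<Sum>l\<in>UNIV. (if same l e then 0 else 1)))"
    by (simp add: sum_distrib_left sum.swap[of _ UNIV E])
  also have "\<dots> = 2 * (\<Sum>e\<in>E. \<bar>c e\<bar> * (N/2))"
    by (intro arg_cong[where f="\<lambda>x. 2 * x"] sum.cong) (simp_all add: half)
  also have "\<dots> = N * (\<Sum>e\<in>E. \<bar>c e\<bar>)" by (simp add: sum_distrib_left sum_distrib_right algebra_simps)
  finally show ?thesis by (intro exists_ge_avg) (simp add: N_def)
qed

lemma cross_reindex:
  fixes E :: "('n::finite) set set" and g :: "'n set \<Rightarrow> real"
  assumes E2: "\<forall>e\<in>E. card e = 2"
  shows "(\<Sum>e\<in>{e\<in>E. \<not> same l e}. g e) = (\<Sum>j\<in>{j. \<not> l j}. \<Sum>i\<in>UNIV. if l i \<and> {i,j}\<in>E then g {i,j} else 0)"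
proof -
  define P where "P = {p \<in> {j. \<not> l j} \<times> UNIV. l (snd p) \<and> {snd p, fst p} \<in> E}"
  have "(\<Sum>j\<in>{j. \<not> l j}. \<Sum>i\<in>UNIV. if l i \<and> {i,j}\<in>E then g {i,j} else 0)
      = (\<Sum>p\<in>{j. \<not> l j} \<times> UNIV. if l (snd p) \<and> {snd p, fst p}\<in>E then g {snd p, fst p} else 0)"
    by (simp add: sum.cartesian_product case_prod_beta)
  also have "\<dots> = (\<Sum>p\<in>P. g {snd p, fst p})"
    unfolding P_def by (subst sum.inter_filter) auto
  also have "\<dots> = (\<Sum>e\<in>{e\<in>E. \<not> same l e}. g e)"
  proof (rule sym, rule sum.reindex_cong[of "\<lambda>p. {snd p, fst p}"])
    show "inj_on (\<lambda>p. {snd p, fst p}) P"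
      unfolding P_def by (auto simp: inj_on_def doubleton_eq_iff)
    show "{e \<in> E. \<not> same l e} = (\<lambda>p. {snd p, fst p}) ` P"
    proof
      show "(\<lambda>p. {snd p, fst p}) ` P \<subseteq> {e \<in> E. \<not> same l e}"
        unfolding P_def by auto
      show "{e \<in> E. \<not> same l e} \<subseteq> (\<lambda>p. {snd p, fst p}) ` P"
      proof
        fix e assume e: "e \<in> {e \<in> E. \<not> same l e}"
        have "card e = 2" using E2 e by auto
        then obtain i j where ij: "e = {i,j}" "i \<noteq> j" by (auto simp: card_2_iff)
        then have d: "l i \<noteq> l j" using e by auto
        show "e \<in> (\<lambda>p. {snd p, fst p}) ` P"
        proof (cases "l i")
          case True
          then have "(j, i) \<in> P" using d e ij unfolding P_def by auto
          then show ?thesis using ij by (auto intro!: image_eqI[where x="(j,i)"])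
        next
          case False
          then have "(i, j) \<in> P" using d e ij unfolding P_def by (auto simp: insert_commute)
          then show ?thesis using ij by (auto intro!: image_eqI[where x="(i,j)"])
        qed
      qed
    qed
  qed simp
  finally show ?thesis by simp
qed

lemma comb:
  fixes E :: "('n::finite) set set" and c :: "'n set \<Rightarrow> real"
  assumes E2: "\<forall>e\<in>E. card e = 2"
  shows "\<exists>\<sigma> \<sigma>'. (\<Sum>e\<in>E. \<bar>c e\<bar>) \<le> 8 * sqrt (real CARD('n)) *
     ((\<Sum>e\<in>E. c e * (if same \<sigma> e then 1 else 0)) - (\<Sum>e\<in>E. c e * (if same \<sigma>' e then 1 else 0)))"
proof -
  obtain l where l: "(\<Sum>e\<in>E. \<bar>c e\<bar>) \<le> 2 * (\<Sum>e\<in>E. \<bar>c e\<bar> * (if same l e then 0 else 1))"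
    using cut_avg[OF E2] by blast
  define D where "D j i = (if l i \<and> {i,j}\<in>E then c {i,j} else 0)" for j i
  define Y where "Y j s = (\<Sum>i\<in>UNIV. D j i * eps (s i))" for j s
  define W where "W s = (\<Sum>j\<in>{j. \<not> l j}. \<bar>Y j s\<bar>)" for s
  define S where "S = (\<Sum>e\<in>E. \<bar>c e\<bar>)"
  define N where "N = real CARD('n\<Rightarrow>bool)"
  define r where "r = sqrt (real CARD('n))"
  have rpos: "r > 0" by (simp add: r_def)
  have N0: "N \<ge> 0" by (simp add: N_def)
  have crossabs: "(\<Sum>e\<in>E. \<bar>c e\<bar> * (if same l e then 0 else 1)) = (\<Sum>j\<in>{j. \<not> l j}. \<Sum>i\<in>UNIV. \<bar>D j i\<bar>)"
  proof -
    have "(\<Sum>e\<in>E. \<bar>c e\<bar> * (if same l e then 0 else 1)) = (\<Sum>e\<in>{e\<in>E. \<not> same l e}. \<bar>c e\<bar>)"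
      by (subst sum.inter_filter) (auto intro: sum.cong)
    also have "\<dots> = (\<Sum>j\<in>{j. \<not> l j}. \<Sum>i\<in>UNIV. if l i \<and> {i,j}\<in>E then \<bar>c {i,j}\<bar> else 0)"
      by (rule cross_reindex[OF E2])
    also have "\<dots> = (\<Sum>j\<in>{j. \<not> l j}. \<Sum>i\<in>UNIV. \<bar>D j i\<bar>)"
      by (simp add: D_def if_distrib)
    finally show ?thesis .
  qed
  have jb: "N * (\<Sum>i\<in>UNIV. \<bar>D j i\<bar>) / (4 * r) \<le> (\<Sum>s\<in>UNIV. \<bar>Y j s\<bar>)" for j
  proof -
    have "(\<Sum>i\<in>UNIV. \<bar>D j i\<bar>) / r \<le> sqrt (\<Sum>i\<in>UNIV. (D j i)^2)"
      using l1_l2[of "D j"] rpos by (simp add: r_def divide_le_eq mult.commute)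
    then have "N * ((\<Sum>i\<in>UNIV. \<bar>D j i\<bar>) / r) / 4 \<le> N * sqrt (\<Sum>i\<in>UNIV. (D j i)^2) / 4"
      using N0 by (intro divide_right_mono mult_left_mono) auto
    also have "\<dots> \<le> (\<Sum>s\<in>UNIV. \<bar>Y j s\<bar>)"
      using khin[of "D j"] by (simp add: Y_def N_def)
    finally show ?thesis by (simp add: field_simps)
  qed
  have "N * (S / (8 * r)) \<le> N * (\<Sum>j\<in>{j. \<not> l j}. \<Sum>i\<in>UNIV. \<bar>D j i\<bar>) / (4 * r)"
    using l N0 rpos unfolding crossabs S_def by (simp add: field_simps mult_left_mono)
  also have "\<dots> = (\<Sum>j\<in>{j. \<not> l j}. N * (\<Sum>i\<in>UNIV. \<bar>D j i\<bar>) / (4 * r))"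
    by (simp add: sum_distrib_left sum_divide_distrib)
  also have "\<dots> \<le> (\<Sum>j\<in>{j. \<not> l j}. \<Sum>s\<in>UNIV. \<bar>Y j s\<bar>)"
    by (intro sum_mono jb)
  also have "\<dots> = (\<Sum>s\<in>UNIV. W s)"
    unfolding W_def by (rule sum.swap)
  finally obtain s where s: "S / (8 * r) \<le> W s"
    using exists_ge_avg[of "S / (8 * r)" W] by (auto simp: N_def)
  define \<sigma> where "\<sigma> v = (if l v then s v else Y v s \<ge> 0)" for v
  define \<sigma>' where "\<sigma>' v = (if l v then \<sigma> v else \<not> \<sigma> v)" for v
  have edge: "c e * (if same \<sigma> e then 1 else 0) - c e * (if same \<sigma>' e then 1 else 0)
      = (if \<not> same l e then c e * eps (same \<sigma> e) else 0)" if "e \<in> E" for e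
  proof -
    have "card e = 2" using E2 that by auto
    then obtain i j where ij: "e = {i,j}" "i \<noteq> j" by (auto simp: card_2_iff)
    show ?thesis using ij by (cases "l i"; cases "l j") (auto simp: \<sigma>'_def eps_def)
  qed
  have "(\<Sum>e\<in>E. c e * (if same \<sigma> e then 1 else 0)) - (\<Sum>e\<in>E. c e * (if same \<sigma>' e then 1 else 0))
      = (\<Sum>e\<in>E. if \<not> same l e then c e * eps (same \<sigma> e) else 0)"
    unfolding sum_subtractf[symmetric] by (rule sum.cong) (simp_all add: edge)
  also have "\<dots> = (\<Sum>e\<in>{e\<in>E. \<not> same l e}. c e * eps (same \<sigma> e))"
    by (subst sum.inter_filter) auto
  also have "\<dots> = (\<Sum>j\<in>{j. \<not> l j}. \<Sum>i\<in>UNIV. if l i \<and> {i,j}\<in>E then c {i,j} * eps (same \<sigma> {i,j}) else 0)"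
    by (rule cross_reindex[OF E2])
  also have "\<dots> = W s"
    unfolding W_def
  proof (rule sum.cong)
    fix j assume "j \<in> {j. \<not> l j}"
    then have nj: "\<not> l j" by simp
    have "(\<Sum>i\<in>UNIV. if l i \<and> {i,j}\<in>E then c {i,j} * eps (same \<sigma> {i,j}) else 0)
        = (\<Sum>i\<in>UNIV. eps (\<sigma> j) * (D j i * eps (s i)))"
    proof (rule sum.cong)
      fix i
      show "(if l i \<and> {i,j}\<in>E then c {i,j} * eps (same \<sigma> {i,j}) else 0) = eps (\<sigma> j) * (D j i * eps (s i))"
        by (cases "l i") (auto simp: D_def eps_eq \<sigma>_def[of i])
    qed simp
    also have "\<dots> = eps (\<sigma> j) * Y j s" by (simp add: Y_def sum_distrib_left)
    also have "\<dots> = \<bar>Y j s\<bar>" using nj by (simp add: \<sigma>_def eps_def)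
    finally show "(\<Sum>i\<in>UNIV. if l i \<and> {i,j}\<in>E then c {i,j} * eps (same \<sigma> {i,j}) else 0) = \<bar>Y j s\<bar>" .
  qed simp
  finally have diff: "(\<Sum>e\<in>E. c e * (if same \<sigma> e then 1 else 0)) - (\<Sum>e\<in>E. c e * (if same \<sigma>' e then 1 else 0)) = W s" .
  have "S \<le> 8 * r * W s" using s rpos by (simp add: field_simps)
  then show ?thesis unfolding diff[symmetric] S_def r_def by blast
qed



definition cnd :: "('n::finite \<Rightarrow> bool) \<Rightarrow> real^'n \<Rightarrow> real \<Rightarrow> 'n \<Rightarrow> bool" where
  "cnd \<sigma> x U i = (if \<sigma> i then U < x$i else 1 - x$i < U)"

definition Af :: "('n::finite \<Rightarrow> bool) \<Rightarrow> real^'n \<Rightarrow> ('n \<Rightarrow> bool) \<Rightarrow> real set" where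
  "Af \<sigma> x f = {U \<in> {0..1}. cnd \<sigma> x U = f}"

lemma Af_sets: "Af \<sigma> x f \<in> sets lborel"
proof -
  have "Af \<sigma> x f = {U \<in> space lborel. U \<in> {0..1} \<and> (\<forall>i. (if \<sigma> i then U < x$i else 1 - x$i < U) = f i)}"
    by (auto simp: Af_def cnd_def fun_eq_iff)
  also have "\<dots> \<in> sets lborel" by measurable
  finally show ?thesis .
qed

lemma sum_Af:
  "(\<Sum>f\<in>UNIV. measure lborel (Af \<sigma> x f) * (if P f then 1 else 0)) = measure lborel {U\<in>{0..1}. P (cnd \<sigma> x U)}"
proof -
  have "(\<Sum>f\<in>UNIV. measure lborel (Af \<sigma> x f) * (if P f then 1 else 0)) = (\<Sum>f\<in>{f\<in>UNIV. P f}. measure lborel (Af \<sigma> x f))"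
    by (subst sum.inter_filter) (auto intro!: sum.cong)
  also have "\<dots> = measure lborel (\<Union>f\<in>{f\<in>UNIV. P f}. Af \<sigma> x f)"
  proof (rule measure_finite_Union[symmetric])
    show "Af \<sigma> x ` {f\<in>UNIV. P f} \<subseteq> sets lborel" using Af_sets by auto
    show "disjoint_family_on (Af \<sigma> x) {f\<in>UNIV. P f}"
      by (auto simp: disjoint_family_on_def Af_def)
    fix f
    have "emeasure lborel (Af \<sigma> x f) \<le> emeasure lborel {0..1::real}"
      by (rule emeasure_mono) (auto simp: Af_def)
    then show "emeasure lborel (Af \<sigma> x f) \<noteq> \<infinity>"
      by (auto simp: top_unique)
  qed simp
  also have "(\<Union>f\<in>{f\<in>UNIV. P f}. Af \<sigma> x f) = {U\<in>{0..1}. P (cnd \<sigma> x U)}"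
    by (auto simp: Af_def)
  finally show ?thesis .
qed

lemma m1:
  assumes "0 \<le> x$i" "x$i \<le> 1"
  shows "measure lborel {U\<in>{0..1}. cnd \<sigma> x U i} = x$i"
proof (cases "\<sigma> i")
  case True
  then have "{U\<in>{0..1}. cnd \<sigma> x U i} = {0..<x$i}" using assms by (auto simp: cnd_def)
  then show ?thesis using assms by simp
next
  case False
  then have "{U\<in>{0..1}. cnd \<sigma> x U i} = {1 - x$i<..1}" using assms by (auto simp: cnd_def)
  then show ?thesis using assms by simp
qed

lemma m2:
  assumes "0 \<le> x$i" "x$i \<le> 1" "0 \<le> x$j" "x$j \<le> 1"
  shows "measure lborel {U\<in>{0..1}. cnd \<sigma> x U i \<and> cnd \<sigma> x U j}
    = (if \<sigma> i = \<sigma> j then min (x$i) (x$j) else max 0 (x$i + x$j - 1))"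
proof -
  have mix: "measure lborel {U\<in>{0..1}. U < a \<and> 1 - b < U} = max 0 (a + b - 1)"
    if "0 \<le> a" "a \<le> 1" "0 \<le> b" "b \<le> 1" for a b :: real
  proof -
    have st: "{U\<in>{0..1}. U < a \<and> 1 - b < U} = {1 - b<..<a}" using that by auto
    show ?thesis
    proof (cases "1 - b \<le> a")
      case True then show ?thesis unfolding st by simp
    next
      case False then show ?thesis unfolding st by simp
    qed
  qed
  show ?thesis
  proof (cases "\<sigma> i"; cases "\<sigma> j")
    assume "\<sigma> i" "\<sigma> j"
    then have "{U\<in>{0..1}. cnd \<sigma> x U i \<and> cnd \<sigma> x U j} = {0..<min (x$i) (x$j)}"
      using assms by (auto simp: cnd_def)
    then show ?thesis using assms \<open>\<sigma> i\<close> \<open>\<sigma> j\<close> by simp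
  next
    assume "\<not> \<sigma> i" "\<not> \<sigma> j"
    then have "{U\<in>{0..1}. cnd \<sigma> x U i \<and> cnd \<sigma> x U j} = {max (1 - x$i) (1 - x$j)<..1}"
      using assms by (auto simp: cnd_def)
    then show ?thesis using assms \<open>\<not> \<sigma> i\<close> \<open>\<not> \<sigma> j\<close> by (simp add: min_def max_def)
  next
    assume "\<sigma> i" "\<not> \<sigma> j"
    then have "{U\<in>{0..1}. cnd \<sigma> x U i \<and> cnd \<sigma> x U j} = {U\<in>{0..1}. U < x$i \<and> 1 - x$j < U}"
      by (auto simp: cnd_def)
    then show ?thesis using assms mix[of "x$i" "x$j"] \<open>\<sigma> i\<close> \<open>\<not> \<sigma> j\<close> by simp
  next
    assume "\<not> \<sigma> i" "\<sigma> j"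
    then have "{U\<in>{0..1}. cnd \<sigma> x U i \<and> cnd \<sigma> x U j} = {U\<in>{0..1}. U < x$j \<and> 1 - x$i < U}"
      by (auto simp: cnd_def)
    then show ?thesis using assms mix[of "x$j" "x$i"] \<open>\<not> \<sigma> i\<close> \<open>\<sigma> j\<close> by (simp add: add.commute)
  qed
qed

definition hi :: "real^'n::finite \<Rightarrow> 'n set \<Rightarrow> real" where "hi x e = Min ((\<lambda>i. x$i) ` e)"
definition lo :: "real^'n::finite \<Rightarrow> 'n set \<Rightarrow> real" where "lo x e = max 0 ((\<Sum>i\<in>e. x$i) - 1)"

lemma hi_pair: "hi x {i,j} = min (x$i) (x$j)" by (simp add: hi_def)
lemma lo_pair: "i \<noteq> j \<Longrightarrow> lo x {i,j} = max 0 (x$i + x$j - 1)" by (simp add: lo_def)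

lemma hull_pt:
  fixes E :: "('n::finite) set set" and x :: "real^'n"
  assumes E2: "\<forall>e\<in>E. card e = 2" and x: "x \<in> unit_cube"
  shows "(x, \<Sum>e\<in>E. a e * (if same \<sigma> e then hi x e else lo x e)) \<in> convex hull (bil_graph E a)"
proof -
  define u where "u f = measure lborel (Af \<sigma> x f)" for f
  define v where "v f = (\<chi> i. if f i then 1 else (0::real))" for f :: "'n \<Rightarrow> bool"
  have x01: "0 \<le> x$i" "x$i \<le> 1" for i using x by (auto simp: unit_cube_def)
  have fstp: "(\<Sum>f\<in>UNIV. u f *\<^sub>R v f) = x"
  proof (subst vec_eq_iff, intro allI)
    fix i
    have "(\<Sum>f\<in>UNIV. u f *\<^sub>R v f) $ i = (\<Sum>f\<in>UNIV. u f * (if f i then 1 else 0))"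
      by (simp add: v_def)
    also have "\<dots> = x$i" unfolding u_def sum_Af using m1[of x i \<sigma>] x01 by simp
    finally show "(\<Sum>f\<in>UNIV. u f *\<^sub>R v f) $ i = x$i" .
  qed
  have sndp: "(\<Sum>f\<in>UNIV. u f * bil E a (v f)) = (\<Sum>e\<in>E. a e * (if same \<sigma> e then hi x e else lo x e))"
  proof -
    have "(\<Sum>f\<in>UNIV. u f * bil E a (v f)) = (\<Sum>e\<in>E. a e * (\<Sum>f\<in>UNIV. u f * (\<Prod>i\<in>e. v f $ i)))"
      unfolding bil_def by (simp add: sum_distrib_left sum.swap[of _ UNIV E] algebra_simps)
    also have "\<dots> = (\<Sum>e\<in>E. a e * (if same \<sigma> e then hi x e else lo x e))"
    proof (rule sum.cong)
      fix e assume "e \<in> E"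
      then have "card e = 2" using E2 by auto
      then obtain i j where ij: "e = {i,j}" "i \<noteq> j" by (auto simp: card_2_iff)
      have "(\<Sum>f\<in>UNIV. u f * (\<Prod>i\<in>e. v f $ i)) = (\<Sum>f\<in>UNIV. u f * (if f i \<and> f j then 1 else 0))"
        using ij by (intro sum.cong) (auto simp: v_def)
      also have "\<dots> = (if \<sigma> i = \<sigma> j then min (x$i) (x$j) else max 0 (x$i + x$j - 1))"
        unfolding u_def sum_Af using m2[of x i j \<sigma>] x01 by simp
      also have "\<dots> = (if same \<sigma> e then hi x e else lo x e)"
        using ij by (simp add: hi_pair lo_pair)
      finally show "a e * (\<Sum>f\<in>UNIV. u f * (\<Prod>i\<in>e. v f $ i)) = a e * (if same \<sigma> e then hi x e else lo x e)"
        by simp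
    qed simp
    finally show ?thesis .
  qed
  have "(\<Sum>f\<in>UNIV. u f *\<^sub>R (v f, bil E a (v f))) \<in> convex hull (bil_graph E a)"
  proof (rule convex_sum)
    show "(\<Sum>f\<in>UNIV. u f) = 1"
    proof -
      have "(\<Sum>f\<in>UNIV. u f) = (\<Sum>f\<in>UNIV. measure lborel (Af \<sigma> x f) * (if (\<lambda>_. True) f then 1 else 0))"
        by (simp add: u_def)
      also have "\<dots> = measure lborel {U\<in>{0..1}. (\<lambda>_. True) (cnd \<sigma> x U)}" by (rule sum_Af)
      also have "\<dots> = 1"
      proof -
        have "{U\<in>{0..1::real}. (\<lambda>_. True) (cnd \<sigma> x U)} = {0..1}" by (rule set_eqI) simp
        then show ?thesis by simp
      qed
      finally show ?thesis .
    qed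
    show "0 \<le> u f" for f by (simp add: u_def)
    show "(v f, bil E a (v f)) \<in> convex hull bil_graph E a" for f
    proof -
      have "v f \<in> unit_cube" by (auto simp: unit_cube_def v_def)
      then have "(v f, bil E a (v f)) \<in> bil_graph E a" by (auto simp: bil_graph_def)
      then show ?thesis by (rule hull_inc)
    qed
  qed (simp_all add: convex_convex_hull)
  moreover have "(\<Sum>f\<in>UNIV. u f *\<^sub>R (v f, bil E a (v f))) = (x, \<Sum>e\<in>E. a e * (if same \<sigma> e then hi x e else lo x e))"
  proof (rule prod_eqI)
    show "fst (\<Sum>f\<in>UNIV. u f *\<^sub>R (v f, bil E a (v f))) = fst (x, \<Sum>e\<in>E. a e * (if same \<sigma> e then hi x e else lo x e))"
      unfolding fst_sum fst_scaleR fst_conv by (rule fstp)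
    show "snd (\<Sum>f\<in>UNIV. u f *\<^sub>R (v f, bil E a (v f))) = snd (x, \<Sum>e\<in>E. a e * (if same \<sigma> e then hi x e else lo x e))"
      unfolding snd_sum snd_scaleR snd_conv real_scaleR_def by (rule sndp)
  qed
  ultimately show ?thesis by simp
qed

lemma hull_bounded:
  fixes E :: "('n::finite) set set"
  shows "bounded (convex hull (bil_graph E a))"
proof -
  have "bil_graph E a = (\<lambda>y. (y, bil E a y)) ` unit_cube" by (auto simp: bil_graph_def)
  moreover have "compact (unit_cube :: (real^'n) set)"
  proof -
    have eq: "(unit_cube :: (real^'n) set) = cbox 0 1" by (auto simp: unit_cube_def mem_box_cart)
    show ?thesis unfolding eq by (rule compact_cbox)
  qed
  moreover have "continuous_on UNIV (\<lambda>y::real^'n. (y, bil E a y))"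
    unfolding bil_def by (intro continuous_intros)
  ultimately have "compact (bil_graph E a)"
    by (metis compact_continuous_image continuous_on_subset subset_UNIV)
  then show ?thesis by (intro compact_imp_bounded compact_convex_hull)
qed

lemma fiber_bdd:
  fixes E :: "('n::finite) set set"
  shows "bdd_above {z. (x, z) \<in> convex hull (bil_graph E a)}" "bdd_below {z. (x, z) \<in> convex hull (bil_graph E a)}"
proof -
  obtain B where B: "\<And>p. p \<in> convex hull (bil_graph E a) \<Longrightarrow> norm p \<le> B"
    using hull_bounded[of E a] unfolding Elementary_Metric_Spaces.bounded_iff by blast
  have zb: "\<bar>z\<bar> \<le> B" if "(x, z) \<in> convex hull (bil_graph E a)" for z
    using B[OF that] norm_snd_le[of z x] by simp
  show "bdd_above {z. (x, z) \<in> convex hull (bil_graph E a)}"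
  proof (rule bdd_aboveI)
    fix z assume "z \<in> {z. (x, z) \<in> convex hull (bil_graph E a)}"
    then show "z \<le> B" using zb by force
  qed
  show "bdd_below {z. (x, z) \<in> convex hull (bil_graph E a)}"
  proof (rule bdd_belowI)
    fix z assume "z \<in> {z. (x, z) \<in> convex hull (bil_graph E a)}"
    then show "-B \<le> z" using zb by force
  qed
qed



lemma mcgap_le:
  fixes E :: "('n::finite) set set" and x :: "real^'n"
  assumes E2: "\<forall>e\<in>E. card e = 2" and x: "x \<in> unit_cube"
  shows "mcgap E a x \<le> (\<Sum>e\<in>E. \<bar>a e\<bar> * (hi x e - lo x e))"
proof -
  define Z where "Z = {z. (x, z) \<in> mcQ E a}"
  define Up where "Up = (\<Sum>e\<in>E. if a e \<ge> 0 then a e * hi x e else a e * lo x e)"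
  define Lw where "Lw = (\<Sum>e\<in>E. if a e \<ge> 0 then a e * lo x e else a e * hi x e)"
  have x01: "0 \<le> x$i" "x$i \<le> 1" for i using x by (auto simp: unit_cube_def)
  have bnds: "lo x e \<le> y e \<and> y e \<le> hi x e" if "(x,y) \<in> mcP E" "e \<in> E" for y e
  proof -
    have "card e = 2" using E2 that by auto
    then obtain i j where ij: "e = {i,j}" "i \<noteq> j" by (auto simp: card_2_iff)
    have "0 \<le> y e" "y e \<le> x$i" "y e \<le> x$j" "x$i + x$j - 1 \<le> y e"
      using that ij by (auto simp: mcP_def)
    then show ?thesis using ij by (simp add: hi_pair lo_pair)
  qed
  have trm: "(if a e \<ge> 0 then a e * lo x e else a e * hi x e) \<le> a e * y e \<and>
              a e * y e \<le> (if a e \<ge> 0 then a e * hi x e else a e * lo x e)"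
    if "lo x e \<le> y e \<and> y e \<le> hi x e" for e y
  proof (cases "a e \<ge> 0")
    case True then show ?thesis using that by (simp add: mult_left_mono)
  next
    case False then show ?thesis using that by (simp add: mult_left_mono_neg)
  qed
  have zin: "Lw \<le> z \<and> z \<le> Up" if zZ: "z \<in> Z" for z
  proof -
    obtain y where y: "(x, y) \<in> mcP E" "z = (\<Sum>e\<in>E. a e * y e)" using zZ by (auto simp: Z_def mcQ_def)
    have "Lw \<le> (\<Sum>e\<in>E. a e * y e)" unfolding Lw_def
      by (intro sum_mono) (use trm bnds y in blast)
    moreover have "(\<Sum>e\<in>E. a e * y e) \<le> Up" unfolding Up_def
      by (intro sum_mono) (use trm bnds y in blast)
    ultimately show ?thesis using y by simp
  qed
  have "(x, lo x) \<in> mcP E"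
  proof -
    have "0 \<le> lo x e \<and> lo x e \<le> 1 \<and> (\<forall>i\<in>e. lo x e \<le> x$i) \<and> (\<Sum>i\<in>e. x$i) - 1 \<le> lo x e" if "e \<in> E" for e
    proof -
      have "card e = 2" using E2 that by auto
      then obtain i j where ij: "e = {i,j}" "i \<noteq> j" by (auto simp: card_2_iff)
      show ?thesis using ij x01[of i] x01[of j] by (auto simp: lo_pair)
    qed
    then show ?thesis using x by (auto simp: mcP_def)
  qed
  then have ne: "Z \<noteq> {}" by (auto simp: Z_def mcQ_def)
  have "mcu E a x \<le> Up" unfolding mcu_def Z_def[symmetric] using ne zin by (intro cSup_least) auto
  moreover have "Lw \<le> mcl E a x" unfolding mcl_def Z_def[symmetric] using ne zin by (intro cInf_greatest) auto
  moreover have "Up - Lw = (\<Sum>e\<in>E. \<bar>a e\<bar> * (hi x e - lo x e))"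
    unfolding Up_def Lw_def sum_subtractf[symmetric]
    by (rule sum.cong) (auto simp: algebra_simps)
  ultimately show ?thesis unfolding mcgap_def by linarith
qed

theorem theorem2:
  fixes E :: "('n::finite) set set" and a :: "'n set \<Rightarrow> real" and x :: "real^'n"
  assumes "simple_graph E"
    and "x \<in> unit_cube"
  shows "mcgap E a x \<le> 600 * sqrt (real CARD('n)) * chgap E a x"
proof -
  have E2: "\<forall>e\<in>E. card e = 2" using assms(1) by (simp add: simple_graph_def)
  define c where "c e = a e * (hi x e - lo x e)" for e
  obtain \<sigma> \<sigma>' where cm: "(\<Sum>e\<in>E. \<bar>c e\<bar>) \<le> 8 * sqrt (real CARD('n)) *
     ((\<Sum>e\<in>E. c e * (if same \<sigma> e then 1 else 0)) - (\<Sum>e\<in>E. c e * (if same \<sigma>' e then 1 else 0)))"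
    using comb[OF E2, of c] by blast
  define b where "b s = (\<Sum>e\<in>E. a e * (if same s e then hi x e else lo x e))" for s
  have "b \<sigma> \<le> cav E a x" unfolding cav_def
    by (rule cSup_upper) (use hull_pt[OF E2 assms(2), of a \<sigma>] fiber_bdd in \<open>auto simp: b_def\<close>)
  moreover have "vex E a x \<le> b \<sigma>'" unfolding vex_def
    by (rule cInf_lower) (use hull_pt[OF E2 assms(2), of a \<sigma>'] fiber_bdd in \<open>auto simp: b_def\<close>)
  ultimately have ch: "b \<sigma> - b \<sigma>' \<le> chgap E a x" unfolding chgap_def by linarith
  have bd: "b \<sigma> - b \<sigma>' = (\<Sum>e\<in>E. c e * (if same \<sigma> e then 1 else 0)) - (\<Sum>e\<in>E. c e * (if same \<sigma>' e then 1 else 0))"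
    unfolding b_def sum_subtractf[symmetric] by (rule sum.cong) (auto simp: c_def algebra_simps)
  have S: "mcgap E a x \<le> (\<Sum>e\<in>E. \<bar>c e\<bar>)"
  proof -
    have "(\<Sum>e\<in>E. \<bar>a e\<bar> * (hi x e - lo x e)) \<le> (\<Sum>e\<in>E. \<bar>c e\<bar>)"
      unfolding c_def abs_mult by (intro sum_mono mult_left_mono) auto
    then show ?thesis using mcgap_le[OF E2 assms(2), of a] by linarith
  qed
  define r where "r = sqrt (real CARD('n))"
  have r0: "r > 0" by (simp add: r_def)
  define D where "D = (\<Sum>e\<in>E. c e * (if same \<sigma> e then 1 else 0)) - (\<Sum>e\<in>E. c e * (if same \<sigma>' e then 1 else 0))"
  have "0 \<le> (\<Sum>e\<in>E. \<bar>c e\<bar>)" by (simp add: sum_nonneg)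
  then have "0 \<le> 8 * r * D" using cm unfolding r_def D_def by linarith
  then have D0: "0 \<le> D" using r0 by (simp add: zero_le_mult_iff)
  have DC: "D \<le> chgap E a x" using ch bd by (simp add: D_def)
  have "mcgap E a x \<le> 8 * r * D" using S cm by (simp add: r_def D_def)
  also have "\<dots> \<le> 600 * r * D" using r0 D0 by (intro mult_right_mono) auto
  also have "\<dots> \<le> 600 * r * chgap E a x" using r0 DC by (intro mult_left_mono) auto
  finally show ?thesis by (simp add: r_def)
qed


end
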